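(* Let $g=\begin{pmatrix}a&b\\c&d\end{pmatrix}\in\mathrm{SL}_2(\mathbb R)$ with $g\notin s$. Then $g\in S$ if and only if $|ad|+|bc|=1$. If $g\notin S$, then there exist uniquely determined $y_1,y_2>0$, $\delta_1,\delta_2\in\{0,1\}$, $v>0$ and a sign $\pm$ such that $$g=\pm\begin{pmatrix}y_1^{1/2}&0\\0&y_1^{-1/2}\end{pmatrix}\omega^{\delta_1}\begin{pmatrix}\cosh v&\sinh v\\ \sinh v&\cosh v\end{pmatrix}\omega^{\delta_2}\begin{pmatrix}y_2^{1/2}&0\\0&y_2^{-1/2}\end{pmatrix},$$ and concretely $y_1=|ab/(cd)|^{1/2}$, $y_2=|ac/(bd)|^{1/2}$, $v=\log(|ad|^{1/2}+|cb|^{1/2})$, and $(\delta_1,\delta_2)=(0,0),(1,1),(1,0),(0,1)$ according as the sign pattern of $(a,b,c,d)$ is $\pm(+,+,+,+)$, $\pm(+,-,-,+)$, $\pm(+,+,-,-)$, $\pm(+,-,+,-)$ respectively.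
   Context: $\omega=\begin{pmatrix}0&-1\\1&0\end{pmatrix}$. $s=\{g\in\mathrm{SL}_2(\mathbb R): gz_1=z_2\text{ for some }z_1,z_2\in\{0,i\infty\}\}$, which equals $\{g: abcd=0\}$; $S=s\cup\{g\in\mathrm{SL}_2(\mathbb R): g(iy_1)=iy_2\text{ for some }y_1,y_2>0\}$. *)

theory Defs
  imports "HOL-Analysis.Analysis"
begin

type_synonym mat2 = "real^2^2"

definition ent_a :: "mat2 \<Rightarrow> real" where "ent_a g = g $ 1 $ 1"
definition ent_b :: "mat2 \<Rightarrow> real" where "ent_b g = g $ 1 $ 2"
definition ent_c :: "mat2 \<Rightarrow> real" where "ent_c g = g $ 2 $ 1"
definition ent_d :: "mat2 \<Rightarrow> real" where "ent_d g = g $ 2 $ 2"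

definition mk2 :: "real \<Rightarrow> real \<Rightarrow> real \<Rightarrow> real \<Rightarrow> mat2" where
  "mk2 a b c d = vector [vector [a, b], vector [c, d]]"

definition SL2R :: "mat2 set" where "SL2R = {g. det g = 1}"

definition omega :: mat2 where "omega = mk2 0 (-1) 1 0"

definition omega_pow :: "nat \<Rightarrow> mat2" where
  "omega_pow \<delta> = (if \<delta> = 0 then mat 1 else omega)"

definition diag_y :: "real \<Rightarrow> mat2" where
  "diag_y y = mk2 (sqrt y) 0 0 (1 / sqrt y)"

definition hyp_rot :: "real \<Rightarrow> mat2" where
  "hyp_rot v = mk2 (cosh v) (sinh v) (sinh v) (cosh v)"

text \<open>Moebius action on the extended plane; None stands for the cusp i\<infinity>.\<close>
definition moeb :: "mat2 \<Rightarrow> complex option \<Rightarrow> complex option" where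
  "moeb g z = (case z of
      None \<Rightarrow> (if ent_c g = 0 then None else Some (of_real (ent_a g) / of_real (ent_c g)))
    | Some w \<Rightarrow> (if of_real (ent_c g) * w + of_real (ent_d g) = 0 then None
                 else Some ((of_real (ent_a g) * w + of_real (ent_b g)) /
                            (of_real (ent_c g) * w + of_real (ent_d g)))))"

definition small_s :: "mat2 set" where
  "small_s = {g \<in> SL2R. \<exists>z1 \<in> {Some 0, None}. \<exists>z2 \<in> {Some 0, None}. moeb g z1 = z2}"

definition big_S :: "mat2 set" where
  "big_S = small_s \<union> {g \<in> SL2R. \<exists>y1>0. \<exists>y2>0.
      moeb g (Some (\<i> * of_real y1)) = Some (\<i> * of_real y2)}"

definition decomp :: "mat2 \<Rightarrow> real \<Rightarrow> real \<Rightarrow> nat \<Rightarrow> nat \<Rightarrow> real \<Rightarrow> real \<Rightarrow> bool" where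
  "decomp g y1 y2 \<delta>1 \<delta>2 v \<sigma> \<longleftrightarrow>
     y1 > 0 \<and> y2 > 0 \<and> \<delta>1 \<in> {0,1} \<and> \<delta>2 \<in> {0,1} \<and> v > 0 \<and> \<sigma> \<in> {1, -1} \<and>
     g = \<sigma> *\<^sub>R (diag_y y1 ** omega_pow \<delta>1 ** hyp_rot v ** omega_pow \<delta>2 ** diag_y y2)"

end

theory Submission
  imports Defs
begin

lemma mk2_ent[simp]: "mk2 a b c d $ 1 $ 1 = a" "mk2 a b c d $ 1 $ 2 = b"
  "mk2 a b c d $ 2 $ 1 = c" "mk2 a b c d $ 2 $ 2 = d"
  by (simp_all add: mk2_def)

lemma mat2_eq: "(A::mat2) = B \<longleftrightarrow> A$1$1 = B$1$1 \<and> A$1$2 = B$1$2 \<and> A$2$1 = B$2$1 \<and> A$2$2 = B$2$2"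
  by (auto simp: vec_eq_iff forall_2)

lemma mk2_mult: "mk2 a b c d ** mk2 a' b' c' d' = mk2 (a*a'+b*c') (a*b'+b*d') (c*a'+d*c') (c*b'+d*d')"
  by (simp add: mat2_eq matrix_matrix_mult_def sum_2)

lemma mat1_mk2: "(mat 1 :: mat2) = mk2 1 0 0 1"
  by (simp add: mat2_eq mat_def)

lemma scale_mk2: "s *\<^sub>R mk2 a b c d = mk2 (s*a) (s*b) (s*c) (s*d)"
  by (simp add: mat2_eq)

lemma g_mk2: "g = mk2 (ent_a g) (ent_b g) (ent_c g) (ent_d g)"
  by (simp add: mat2_eq ent_a_def ent_b_def ent_c_def ent_d_def)

lemma det_mk2: "det (mk2 a b c d) = a*d - b*c"
  by (simp add: det_2)

lemma prod00: "y1 > 0 \<Longrightarrow> y2 > 0 \<Longrightarrow> diag_y y1 ** omega_pow 0 ** hyp_rot v ** omega_pow 0 ** diag_y y2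
  = mk2 (sqrt y1 * sqrt y2 * cosh v) (sqrt y1 / sqrt y2 * sinh v) (sqrt y2 / sqrt y1 * sinh v) (cosh v / (sqrt y1 * sqrt y2))"
  by (simp add: omega_pow_def mat1_mk2 diag_y_def hyp_rot_def mk2_mult mat2_eq field_simps)
lemma prod11: "y1 > 0 \<Longrightarrow> y2 > 0 \<Longrightarrow> diag_y y1 ** omega_pow 1 ** hyp_rot v ** omega_pow 1 ** diag_y y2
  = mk2 (-(sqrt y1 * sqrt y2 * cosh v)) (sqrt y1 / sqrt y2 * sinh v) (sqrt y2 / sqrt y1 * sinh v) (-(cosh v / (sqrt y1 * sqrt y2)))"
  by (simp add: omega_pow_def omega_def diag_y_def hyp_rot_def mk2_mult mat2_eq field_simps)
lemma prod10: "y1 > 0 \<Longrightarrow> y2 > 0 \<Longrightarrow> diag_y y1 ** omega_pow 1 ** hyp_rot v ** omega_pow 0 ** diag_y y2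
  = mk2 (-(sqrt y1 * sqrt y2 * sinh v)) (-(sqrt y1 / sqrt y2 * cosh v)) (sqrt y2 / sqrt y1 * cosh v) (sinh v / (sqrt y1 * sqrt y2))"
  by (simp add: omega_pow_def omega_def mat1_mk2 diag_y_def hyp_rot_def mk2_mult mat2_eq field_simps)
lemma prod01: "y1 > 0 \<Longrightarrow> y2 > 0 \<Longrightarrow> diag_y y1 ** omega_pow 0 ** hyp_rot v ** omega_pow 1 ** diag_y y2
  = mk2 (sqrt y1 * sqrt y2 * sinh v) (-(sqrt y1 / sqrt y2 * cosh v)) (sqrt y2 / sqrt y1 * cosh v) (-(sinh v / (sqrt y1 * sqrt y2)))"
  by (simp add: omega_pow_def omega_def mat1_mk2 diag_y_def hyp_rot_def mk2_mult mat2_eq field_simps)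

lemma generic:
  fixes a b c d s1 s2 p q \<sigma> ea eb ec ed :: real
  assumes "s1 > 0" "s2 > 0" "p > 0" "q > 0" "\<bar>\<sigma>\<bar> = 1" "\<bar>ea\<bar> = 1" "\<bar>eb\<bar> = 1" "\<bar>ec\<bar> = 1" "\<bar>ed\<bar> = 1"
   "a = \<sigma>*ea*(s1 * s2*p)" "b = \<sigma>*eb*(s1/s2*q)" "c = \<sigma>*ec*(s2/s1*q)" "d = \<sigma>*ed*(p/(s1 * s2))"
  shows "sqrt \<bar>a*b/(c*d)\<bar> = s1^2 \<and> sqrt \<bar>a*c/(b*d)\<bar> = s2^2 \<and> sqrt \<bar>a*d\<bar> + sqrt \<bar>c*b\<bar> = p+q"
proof -
  have A: "\<bar>a\<bar> = s1 * s2*p" "\<bar>b\<bar> = s1/s2*q" "\<bar>c\<bar> = s2/s1*q" "\<bar>d\<bar> = p/(s1 * s2)"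
    using assms by (simp_all add: abs_mult)
  have "\<bar>a*b/(c*d)\<bar> = (s1^2)^2" unfolding abs_mult abs_divide A using assms by (simp add: field_simps power2_eq_square)
  moreover have "\<bar>a*c/(b*d)\<bar> = (s2^2)^2" unfolding abs_mult abs_divide A using assms by (simp add: field_simps power2_eq_square)
  moreover have "\<bar>a*d\<bar> = p^2" "\<bar>c*b\<bar> = q^2" unfolding abs_mult A using assms by (simp_all add: field_simps power2_eq_square)
  moreover have "sqrt ((s1^2)^2) = s1^2" "sqrt ((s2^2)^2) = s2^2" "sqrt (p^2) = p" "sqrt (q^2) = q"
    using assms by (auto intro: real_sqrt_unique)
  ultimately show ?thesis by metis
qed

lemma char_core:
  fixes a b c d y1 y2 v \<sigma> :: real and \<delta>1 \<delta>2 :: nat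
  assumes "y1 > 0" "y2 > 0" "v > 0" "\<sigma> \<in> {1,-1}" "\<delta>1 \<in> {0,1}" "\<delta>2 \<in> {0,1}"
    and M: "mk2 a b c d = \<sigma> *\<^sub>R (diag_y y1 ** omega_pow \<delta>1 ** hyp_rot v ** omega_pow \<delta>2 ** diag_y y2)"
  shows "a \<noteq> 0 \<and> y1 = sqrt \<bar>a*b/(c*d)\<bar> \<and> y2 = sqrt \<bar>a*c/(b*d)\<bar> \<and> v = ln (sqrt \<bar>a*d\<bar> + sqrt \<bar>c*b\<bar>)
    \<and> \<delta>1 = (if sgn c = sgn a then 0 else 1) \<and> \<delta>2 = (if sgn b = sgn a then 0 else 1)
    \<and> \<sigma> = (if \<delta>1 = 0 then sgn a else - sgn a)"
proof -
  define s1 where "s1 = sqrt y1"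
  define s2 where "s2 = sqrt y2"
  have s: "s1 > 0" "s2 > 0" "s1^2 = y1" "s2^2 = y2" using assms by (auto simp: s1_def s2_def)
  have CS: "cosh v > 0" "sinh v > 0" using assms(3) by (auto simp: sinh_real_pos_iff)
  have L: "ln (cosh v + sinh v) = v" by (simp add: cosh_plus_sinh)
  have sg: "\<bar>\<sigma>\<bar> = 1" "sgn \<sigma> = \<sigma>" using assms(4) by auto
  have "(\<delta>1 = 0 \<and> \<delta>2 = 0) \<or> (\<delta>1 = 1 \<and> \<delta>2 = 1) \<or> (\<delta>1 = 1 \<and> \<delta>2 = 0) \<or> (\<delta>1 = 0 \<and> \<delta>2 = 1)"
    using assms(5,6) by auto
  then show ?thesis
  proof (elim disjE conjE)
    assume d: "\<delta>1 = 0" "\<delta>2 = 0"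
    have e: "a = \<sigma>*1*(s1 * s2 * cosh v)" "b = \<sigma>*1*(s1/s2 * sinh v)" "c = \<sigma>*1*(s2/s1 * sinh v)" "d = \<sigma>*1*(cosh v/(s1 * s2))"
      using M unfolding d prod00[OF assms(1,2)] scale_mk2 s1_def s2_def by (simp_all add: mat2_eq)
    note G = generic[OF s(1,2) CS sg(1) _ _ _ _ e]
    show ?thesis using G s e d CS sg L by (auto simp: sgn_mult)
  next
    assume d: "\<delta>1 = 1" "\<delta>2 = 1"
    have e: "a = \<sigma>*(-1)*(s1 * s2 * cosh v)" "b = \<sigma>*1*(s1/s2 * sinh v)" "c = \<sigma>*1*(s2/s1 * sinh v)" "d = \<sigma>*(-1)*(cosh v/(s1 * s2))"
      using M unfolding d prod11[OF assms(1,2)] scale_mk2 s1_def s2_def by (simp_all add: mat2_eq)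
    note G = generic[OF s(1,2) CS sg(1) _ _ _ _ e]
    show ?thesis using G s e d CS sg L by (auto simp: sgn_mult)
  next
    assume d: "\<delta>1 = 1" "\<delta>2 = 0"
    have e: "a = \<sigma>*(-1)*(s1 * s2 * sinh v)" "b = \<sigma>*(-1)*(s1/s2 * cosh v)" "c = \<sigma>*1*(s2/s1 * cosh v)" "d = \<sigma>*1*(sinh v/(s1 * s2))"
      using M unfolding d prod10[OF assms(1,2)] scale_mk2 s1_def s2_def by (simp_all add: mat2_eq)
    note G = generic[OF s(1,2) CS(2,1) sg(1) _ _ _ _ e]
    show ?thesis using G s e d CS sg L by (auto simp: sgn_mult add.commute)
  next
    assume d: "\<delta>1 = 0" "\<delta>2 = 1"
    have e: "a = \<sigma>*1*(s1 * s2 * sinh v)" "b = \<sigma>*(-1)*(s1/s2 * cosh v)" "c = \<sigma>*1*(s2/s1 * cosh v)" "d = \<sigma>*(-1)*(sinh v/(s1 * s2))"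
      using M unfolding d prod01[OF assms(1,2)] scale_mk2 s1_def s2_def by (simp_all add: mat2_eq)
    note G = generic[OF s(1,2) CS(2,1) sg(1) _ _ _ _ e]
    show ?thesis using G s e d CS sg L by (auto simp: sgn_mult add.commute)
  qed
qed

lemma mags:
  fixes \<alpha> \<beta> \<gamma> \<delta> :: real
  assumes "\<alpha> > 0" "\<beta> > 0" "\<gamma> > 0" "\<delta> > 0"
  defines "s1 \<equiv> sqrt (sqrt (\<alpha>*\<beta>/(\<gamma>*\<delta>)))" and "s2 \<equiv> sqrt (sqrt (\<alpha>*\<gamma>/(\<beta>*\<delta>)))"
  shows "s1 * s2 * sqrt (\<alpha>*\<delta>) = \<alpha>" "s1 / s2 * sqrt (\<gamma>*\<beta>) = \<beta>" "s2 / s1 * sqrt (\<gamma>*\<beta>) = \<gamma>"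
     "sqrt (\<alpha>*\<delta>) / (s1 * s2) = \<delta>"
proof -
  have p: "s1 * s2 = sqrt (\<alpha>/\<delta>)"
  proof -
    have "s1 * s2 = sqrt (sqrt ((\<alpha>*\<beta>/(\<gamma>*\<delta>)) * (\<alpha>*\<gamma>/(\<beta>*\<delta>))))"
      unfolding s1_def s2_def real_sqrt_mult ..
    also have "(\<alpha>*\<beta>/(\<gamma>*\<delta>)) * (\<alpha>*\<gamma>/(\<beta>*\<delta>)) = (\<alpha>/\<delta>)^2" using assms by (simp add: field_simps power2_eq_square)
    finally show ?thesis using assms by simp
  qed
  have q: "s1 / s2 = sqrt (\<beta>/\<gamma>)"
  proof -
    have "s1 / s2 = sqrt (sqrt ((\<alpha>*\<beta>/(\<gamma>*\<delta>)) / (\<alpha>*\<gamma>/(\<beta>*\<delta>))))"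
      unfolding s1_def s2_def real_sqrt_divide ..
    also have "(\<alpha>*\<beta>/(\<gamma>*\<delta>)) / (\<alpha>*\<gamma>/(\<beta>*\<delta>)) = (\<beta>/\<gamma>)^2" using assms by (simp add: field_simps power2_eq_square)
    finally show ?thesis using assms by simp
  qed
  have s0: "s1 > 0" "s2 > 0" using assms by (simp_all add: s1_def s2_def)
  have "s1 * s2 * sqrt (\<alpha>*\<delta>) = sqrt (\<alpha>/\<delta> * (\<alpha>*\<delta>))" unfolding p real_sqrt_mult ..
  also have "\<alpha>/\<delta> * (\<alpha>*\<delta>) = \<alpha>^2" using assms by (simp add: field_simps power2_eq_square)
  finally show "s1 * s2 * sqrt (\<alpha>*\<delta>) = \<alpha>" using assms by simp
  have "s1 / s2 * sqrt (\<gamma>*\<beta>) = sqrt (\<beta>/\<gamma> * (\<gamma>*\<beta>))" unfolding q real_sqrt_mult ..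
  also have "\<beta>/\<gamma> * (\<gamma>*\<beta>) = \<beta>^2" using assms by (simp add: field_simps power2_eq_square)
  finally show "s1 / s2 * sqrt (\<gamma>*\<beta>) = \<beta>" using assms by simp
  have "s2 / s1 = inverse (s1/s2)" by simp
  then have "s2 / s1 * sqrt (\<gamma>*\<beta>) = sqrt (\<gamma>/\<beta> * (\<gamma>*\<beta>))" unfolding q real_sqrt_mult
    by (simp add: real_sqrt_inverse[symmetric])
  also have "\<gamma>/\<beta> * (\<gamma>*\<beta>) = \<gamma>^2" using assms by (simp add: field_simps power2_eq_square)
  finally show "s2 / s1 * sqrt (\<gamma>*\<beta>) = \<gamma>" using assms by simp
  have "sqrt (\<alpha>*\<delta>) / (s1 * s2) = sqrt (\<alpha>*\<delta> / (\<alpha>/\<delta>))" unfolding p real_sqrt_divide ..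
  also have "\<alpha>*\<delta> / (\<alpha>/\<delta>) = \<delta>^2" using assms by (simp add: field_simps power2_eq_square)
  finally show "sqrt (\<alpha>*\<delta>) / (s1 * s2) = \<delta>" using assms by simp
qed

lemma hyp_vals:
  fixes P Q :: real
  assumes "P > 0" "Q > 0" "P - Q = 1"
  shows "cosh (ln (sqrt P + sqrt Q)) = sqrt P" "sinh (ln (sqrt P + sqrt Q)) = sqrt Q"
    "ln (sqrt P + sqrt Q) > 0"
proof -
  have x: "sqrt P + sqrt Q > 0" using assms by (intro add_pos_pos) simp_all
  have "(sqrt P + sqrt Q) * (sqrt P - sqrt Q) = 1"
    using assms by (simp add: algebra_simps power2_eq_square[symmetric])
  then have i: "inverse (sqrt P + sqrt Q) = sqrt P - sqrt Q" using x by (simp add: field_simps)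
  show "cosh (ln (sqrt P + sqrt Q)) = sqrt P" "sinh (ln (sqrt P + sqrt Q)) = sqrt Q"
    using x by (simp_all add: cosh_ln_real sinh_ln_real i)
  have "P > 1" using assms by simp
  then have "sqrt P > 1" by simp
  moreover have "sqrt Q > 0" using assms by simp
  ultimately show "ln (sqrt P + sqrt Q) > 0" by (intro ln_gt_zero) linarith
qed

lemma mk2_eq: "mk2 a b c d = mk2 a' b' c' d' \<longleftrightarrow> a = a' \<and> b = b' \<and> c = c' \<and> d = d'"
  by (simp add: mat2_eq)

lemma fin: assumes "X = mk2 a' b' c' d'" "a = s*a'" "b = s*b'" "c = s*c'" "d = s*d'"
  shows "mk2 a b c d = s *\<^sub>R X" by (simp add: assms scale_mk2)

lemma exist_core:
  fixes a b c d :: real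
  assumes nz: "a \<noteq> 0" "b \<noteq> 0" "c \<noteq> 0" "d \<noteq> 0" and det: "a*d - b*c = 1" and pos: "a*b*c*d > 0"
  shows "decomp (mk2 a b c d) (sqrt \<bar>a*b/(c*d)\<bar>) (sqrt \<bar>a*c/(b*d)\<bar>)
     (if sgn c = sgn a then 0 else 1) (if sgn b = sgn a then 0 else 1)
     (ln (sqrt \<bar>a*d\<bar> + sqrt \<bar>c*b\<bar>)) (if sgn c = sgn a then sgn a else - sgn a)"
proof -
  define y1 where "y1 = sqrt \<bar>a*b/(c*d)\<bar>"
  define y2 where "y2 = sqrt \<bar>a*c/(b*d)\<bar>"
  define v where "v = ln (sqrt \<bar>a*d\<bar> + sqrt \<bar>c*b\<bar>)"
  have ab: "\<bar>a\<bar> > 0" "\<bar>b\<bar> > 0" "\<bar>c\<bar> > 0" "\<bar>d\<bar> > 0" using nz by auto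
  have sy1: "sqrt y1 = sqrt (sqrt (\<bar>a\<bar>*\<bar>b\<bar>/(\<bar>c\<bar>*\<bar>d\<bar>)))" by (simp add: y1_def abs_mult abs_divide)
  have sy2: "sqrt y2 = sqrt (sqrt (\<bar>a\<bar>*\<bar>c\<bar>/(\<bar>b\<bar>*\<bar>d\<bar>)))" by (simp add: y2_def abs_mult abs_divide)
  have ypos: "y1 > 0" "y2 > 0" using nz by (simp_all add: y1_def y2_def)
  note M = mags[OF ab, folded sy1 sy2]
  have vv: "v = ln (sqrt (\<bar>a\<bar>*\<bar>d\<bar>) + sqrt (\<bar>c\<bar>*\<bar>b\<bar>))" by (simp add: v_def abs_mult)
  have PQ: "0 < \<bar>a\<bar>*\<bar>d\<bar>" "0 < \<bar>c\<bar>*\<bar>b\<bar>" using ab by simp_all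
  have main: "v > 0 \<and> mk2 a b c d = (if sgn c = sgn a then sgn a else - sgn a) *\<^sub>R
      (diag_y y1 ** omega_pow (if sgn c = sgn a then 0 else 1) ** hyp_rot v ** omega_pow (if sgn b = sgn a then 0 else 1) ** diag_y y2)"
  proof (cases "a*d > 0")
    case True
    have pp: "(a*d)*(b*c) > 0" using pos by (simp add: ac_simps)
    then have "b*c > 0" using True by (simp add: zero_less_mult_iff)
    then have "\<bar>a\<bar>*\<bar>d\<bar> - \<bar>c\<bar>*\<bar>b\<bar> = 1" using True det by (simp add: abs_mult[symmetric] mult.commute)
    note H = hyp_vals[OF PQ this, folded vv]
    have E00: "diag_y y1 ** omega_pow 0 ** hyp_rot v ** omega_pow 0 ** diag_y y2 = mk2 \<bar>a\<bar> \<bar>b\<bar> \<bar>c\<bar> \<bar>d\<bar>"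
      unfolding prod00[OF ypos] H(1,2) M ..
    have E11: "diag_y y1 ** omega_pow 1 ** hyp_rot v ** omega_pow 1 ** diag_y y2 = mk2 (-\<bar>a\<bar>) \<bar>b\<bar> \<bar>c\<bar> (-\<bar>d\<bar>)"
      unfolding prod11[OF ypos] H(1,2) M ..
    have "a > 0 \<and> d > 0 \<or> a < 0 \<and> d < 0" using True by (simp add: zero_less_mult_iff)
    moreover have "b > 0 \<and> c > 0 \<or> b < 0 \<and> c < 0" using \<open>b*c > 0\<close> by (simp add: zero_less_mult_iff)
    moreover { assume cs: "a > 0" "b > 0" "c > 0" "d > 0"
      have s: "sgn a = 1" "sgn b = 1" "sgn c = 1" using cs by simp_all
      have i1: "(if sgn c = sgn a then 0 else 1::nat) = 0" using s by simp
      have i2: "(if sgn b = sgn a then 0 else 1::nat) = 0" using s by simp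
      have i3: "(if sgn c = sgn a then sgn a else - sgn a) = 1" using s by simp
      have "mk2 a b c d = (1) *\<^sub>R (diag_y y1 ** omega_pow 0 ** hyp_rot v ** omega_pow 0 ** diag_y y2)"
        by (rule fin[OF E00]) (use cs in simp_all)
      then have ?thesis unfolding i1 i2 i3 using H(3) by blast }
    moreover { assume cs: "a > 0" "b < 0" "c < 0" "d > 0"
      have s: "sgn a = 1" "sgn b = -1" "sgn c = -1" using cs by simp_all
      have i1: "(if sgn c = sgn a then 0 else 1::nat) = 1" using s by simp
      have i2: "(if sgn b = sgn a then 0 else 1::nat) = 1" using s by simp
      have i3: "(if sgn c = sgn a then sgn a else - sgn a) = -1" using s by simp
      have "mk2 a b c d = (-1) *\<^sub>R (diag_y y1 ** omega_pow 1 ** hyp_rot v ** omega_pow 1 ** diag_y y2)"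
        by (rule fin[OF E11]) (use cs in simp_all)
      then have ?thesis unfolding i1 i2 i3 using H(3) by blast }
    moreover { assume cs: "a < 0" "b > 0" "c > 0" "d < 0"
      have s: "sgn a = -1" "sgn b = 1" "sgn c = 1" using cs by simp_all
      have i1: "(if sgn c = sgn a then 0 else 1::nat) = 1" using s by simp
      have i2: "(if sgn b = sgn a then 0 else 1::nat) = 1" using s by simp
      have i3: "(if sgn c = sgn a then sgn a else - sgn a) = 1" using s by simp
      have "mk2 a b c d = (1) *\<^sub>R (diag_y y1 ** omega_pow 1 ** hyp_rot v ** omega_pow 1 ** diag_y y2)"
        by (rule fin[OF E11]) (use cs in simp_all)
      then have ?thesis unfolding i1 i2 i3 using H(3) by blast }
    moreover { assume cs: "a < 0" "b < 0" "c < 0" "d < 0"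
      have s: "sgn a = -1" "sgn b = -1" "sgn c = -1" using cs by simp_all
      have i1: "(if sgn c = sgn a then 0 else 1::nat) = 0" using s by simp
      have i2: "(if sgn b = sgn a then 0 else 1::nat) = 0" using s by simp
      have i3: "(if sgn c = sgn a then sgn a else - sgn a) = -1" using s by simp
      have "mk2 a b c d = (-1) *\<^sub>R (diag_y y1 ** omega_pow 0 ** hyp_rot v ** omega_pow 0 ** diag_y y2)"
        by (rule fin[OF E00]) (use cs in simp_all)
      then have ?thesis unfolding i1 i2 i3 using H(3) by blast }
    ultimately show ?thesis by blast
  next
    case False
    then have "a*d < 0" using nz by (simp add: not_less order_le_less)
    have pp: "(a*d)*(b*c) > 0" using pos by (simp add: ac_simps)
    then have "b*c < 0" using \<open>a*d < 0\<close> by (smt (verit) mult_nonpos_nonneg)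
    then have "\<bar>c\<bar>*\<bar>b\<bar> - \<bar>a\<bar>*\<bar>d\<bar> = 1" using \<open>a*d < 0\<close> det by (simp add: abs_mult[symmetric] mult.commute)
    note H = hyp_vals[OF PQ(2,1) this, unfolded add.commute[of "sqrt (\<bar>c\<bar>*\<bar>b\<bar>)"], folded vv]
    have E10: "diag_y y1 ** omega_pow 1 ** hyp_rot v ** omega_pow 0 ** diag_y y2 = mk2 (-\<bar>a\<bar>) (-\<bar>b\<bar>) \<bar>c\<bar> \<bar>d\<bar>"
      unfolding prod10[OF ypos] H(1,2) M ..
    have E01: "diag_y y1 ** omega_pow 0 ** hyp_rot v ** omega_pow 1 ** diag_y y2 = mk2 \<bar>a\<bar> (-\<bar>b\<bar>) \<bar>c\<bar> (-\<bar>d\<bar>)"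
      unfolding prod01[OF ypos] H(1,2) M ..
    have "a > 0 \<and> d < 0 \<or> a < 0 \<and> d > 0" using \<open>a*d < 0\<close> by (simp add: mult_less_0_iff)
    moreover have "b > 0 \<and> c < 0 \<or> b < 0 \<and> c > 0" using \<open>b*c < 0\<close> by (simp add: mult_less_0_iff)
    moreover { assume cs: "a > 0" "b > 0" "c < 0" "d < 0"
      have s: "sgn a = 1" "sgn b = 1" "sgn c = -1" using cs by simp_all
      have i1: "(if sgn c = sgn a then 0 else 1::nat) = 1" using s by simp
      have i2: "(if sgn b = sgn a then 0 else 1::nat) = 0" using s by simp
      have i3: "(if sgn c = sgn a then sgn a else - sgn a) = -1" using s by simp
      have "mk2 a b c d = (-1) *\<^sub>R (diag_y y1 ** omega_pow 1 ** hyp_rot v ** omega_pow 0 ** diag_y y2)"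
        by (rule fin[OF E10]) (use cs in simp_all)
      then have ?thesis unfolding i1 i2 i3 using H(3) by blast }
    moreover { assume cs: "a > 0" "b < 0" "c > 0" "d < 0"
      have s: "sgn a = 1" "sgn b = -1" "sgn c = 1" using cs by simp_all
      have i1: "(if sgn c = sgn a then 0 else 1::nat) = 0" using s by simp
      have i2: "(if sgn b = sgn a then 0 else 1::nat) = 1" using s by simp
      have i3: "(if sgn c = sgn a then sgn a else - sgn a) = 1" using s by simp
      have "mk2 a b c d = (1) *\<^sub>R (diag_y y1 ** omega_pow 0 ** hyp_rot v ** omega_pow 1 ** diag_y y2)"
        by (rule fin[OF E01]) (use cs in simp_all)
      then have ?thesis unfolding i1 i2 i3 using H(3) by blast }
    moreover { assume cs: "a < 0" "b > 0" "c < 0" "d > 0"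
      have s: "sgn a = -1" "sgn b = 1" "sgn c = -1" using cs by simp_all
      have i1: "(if sgn c = sgn a then 0 else 1::nat) = 0" using s by simp
      have i2: "(if sgn b = sgn a then 0 else 1::nat) = 1" using s by simp
      have i3: "(if sgn c = sgn a then sgn a else - sgn a) = -1" using s by simp
      have "mk2 a b c d = (-1) *\<^sub>R (diag_y y1 ** omega_pow 0 ** hyp_rot v ** omega_pow 1 ** diag_y y2)"
        by (rule fin[OF E01]) (use cs in simp_all)
      then have ?thesis unfolding i1 i2 i3 using H(3) by blast }
    moreover { assume cs: "a < 0" "b < 0" "c > 0" "d > 0"
      have s: "sgn a = -1" "sgn b = -1" "sgn c = 1" using cs by simp_all
      have i1: "(if sgn c = sgn a then 0 else 1::nat) = 1" using s by simp
      have i2: "(if sgn b = sgn a then 0 else 1::nat) = 0" using s by simp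
      have i3: "(if sgn c = sgn a then sgn a else - sgn a) = 1" using s by simp
      have "mk2 a b c d = (1) *\<^sub>R (diag_y y1 ** omega_pow 1 ** hyp_rot v ** omega_pow 0 ** diag_y y2)"
        by (rule fin[OF E10]) (use cs in simp_all)
      then have ?thesis unfolding i1 i2 i3 using H(3) by blast }
    ultimately show ?thesis by blast
  qed
  have sg: "(if sgn c = sgn a then sgn a else - sgn a) \<in> {1,-1}" using nz by (auto simp: sgn_if)
  have dd: "(if sgn c = sgn a then 0 else 1::nat) \<in> {0,1}" "(if sgn b = sgn a then 0 else 1::nat) \<in> {0,1}" by simp_all
  show ?thesis unfolding decomp_def y1_def[symmetric] y2_def[symmetric] v_def[symmetric]
    using main ypos sg dd by blast
qed


lemma nz_of_not_small:
  assumes "g \<notin> small_s" "g \<in> SL2R"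
  shows "ent_a g \<noteq> 0 \<and> ent_b g \<noteq> 0 \<and> ent_c g \<noteq> 0 \<and> ent_d g \<noteq> 0"
proof (rule ccontr)
  assume H: "\<not> ?thesis"
  have "\<exists>z1 \<in> {Some 0, None}. \<exists>z2 \<in> {Some 0, None}. moeb g z1 = z2"
  proof (cases "ent_c g = 0")
    case True
    show ?thesis by (rule bexI[of _ None], rule bexI[of _ None]) (simp_all add: moeb_def True)
  next
    case c: False
    show ?thesis
    proof (cases "ent_d g = 0")
      case True
      show ?thesis by (rule bexI[of _ "Some 0"], rule bexI[of _ None]) (simp_all add: moeb_def True)
    next
      case d: False
      show ?thesis
      proof (cases "ent_a g = 0")
        case True
        show ?thesis by (rule bexI[of _ None], rule bexI[of _ "Some 0"]) (simp_all add: moeb_def True c)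
      next
        case False
        then have "ent_b g = 0" using H c d by blast
        show ?thesis by (rule bexI[of _ "Some 0"], rule bexI[of _ "Some 0"]) (simp_all add: moeb_def d \<open>ent_b g = 0\<close>)
      qed
    qed
  qed
  then show False using assms by (simp add: small_s_def)
qed

lemma moeb_iy:
  assumes "ent_d g \<noteq> 0"
  shows "moeb g (Some (\<i> * of_real y)) = Some (\<i> * of_real y2) \<longleftrightarrow>
    ent_b g = - y2 * ent_c g * y \<and> ent_a g * y = y2 * ent_d g"
proof -
  let ?B = "of_real (ent_c g) * (\<i> * of_real y) + of_real (ent_d g) :: complex"
  let ?A = "of_real (ent_a g) * (\<i> * of_real y) + of_real (ent_b g) :: complex"
  have B: "?B \<noteq> 0" using assms by (simp add: complex_eq_iff)
  have "moeb g (Some (\<i> * of_real y)) = Some (?A / ?B)" using B by (simp add: moeb_def)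
  moreover have "?A / ?B = \<i> * of_real y2 \<longleftrightarrow> ?A = \<i> * of_real y2 * ?B" using B by (simp add: field_simps)
  moreover have "?A = \<i> * of_real y2 * ?B \<longleftrightarrow> ent_b g = - y2 * ent_c g * y \<and> ent_a g * y = y2 * ent_d g"
    by (simp add: complex_eq_iff algebra_simps)
  ultimately show ?thesis by simp
qed

lemma bigS_iff:
  fixes a b c d :: real
  assumes "g \<in> SL2R" "g \<notin> small_s" "a = ent_a g" "b = ent_b g" "c = ent_c g" "d = ent_d g"
  shows "g \<in> big_S \<longleftrightarrow> a*b*c*d < 0"
proof -
  have nz: "a \<noteq> 0" "b \<noteq> 0" "c \<noteq> 0" "d \<noteq> 0" using nz_of_not_small[OF assms(2,1)] assms by auto
  have det: "a*d - b*c = 1" using assms(1) unfolding SL2R_def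
    by (subst (asm) g_mk2) (simp add: det_mk2 assms)
  have "g \<in> big_S \<longleftrightarrow> (\<exists>y1>0. \<exists>y2>0. b = - y2 * c * y1 \<and> a * y1 = y2 * d)"
    using assms moeb_iy[of g] nz by (auto simp: big_S_def)
  also have "\<dots> \<longleftrightarrow> a*b*c*d < 0"
  proof
    assume "\<exists>y1>0. \<exists>y2>0. b = - y2 * c * y1 \<and> a * y1 = y2 * d"
    then obtain y1 y2 where y: "y1 > 0" "y2 > 0" "b = - y2 * c * y1" "a * y1 = y2 * d" by blast
    then have "a = y2 * d / y1" by (simp add: field_simps)
    then have "a*b*c*d = - ((y2 * c * d) * (y2 * c * d))" using y by (simp add: field_simps)
    moreover have "y2 * c * d \<noteq> 0" using y nz by simp
    then have "(y2 * c * d) * (y2 * c * d) > 0" using not_real_square_gt_zero by blast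
    ultimately show "a*b*c*d < 0" by linarith
  next
    assume n: "a*b*c*d < 0"
    have "(a*d)*(b*c) < 0" using n by (simp add: ac_simps)
    have ad: "a*d > 0"
    proof (rule ccontr)
      assume "\<not> a*d > 0"
      then have "a*d \<le> 0" by simp
      then have "b*c < 0" using det by simp
      then have "(a*d)*(b*c) \<ge> 0" using \<open>a*d \<le> 0\<close> by (simp add: mult_nonpos_nonpos)
      then show False using \<open>(a*d)*(b*c) < 0\<close> by simp
    qed
    have q: "-(b*d)/(a*c) > 0"
    proof -
      have "-(b*d)/(a*c) = -(a*b*c*d)/(a*c)^2" using nz by (simp add: field_simps power2_eq_square)
      moreover have "(a*c)^2 > 0" using nz by simp
      moreover have "-(a*b*c*d)/(a*c)^2 > 0" using n \<open>(a*c)^2 > 0\<close> by (intro divide_pos_pos) simp_all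
      ultimately show ?thesis by simp
    qed
    define y1 where "y1 = sqrt (-(b*d)/(a*c))"
    define y2 where "y2 = a*y1/d"
    have y1: "y1 > 0" "y1^2 = -(b*d)/(a*c)" using q by (simp_all add: y1_def)
    have "a/d > 0" using ad nz by (simp add: zero_less_divide_iff zero_less_mult_iff)
    moreover have "y2 = (a/d)*y1" by (simp add: y2_def)
    ultimately have y2: "y2 > 0" using y1 by (metis mult_pos_pos)
    have "b = - y2 * c * y1" using nz y1(2) unfolding y2_def by (simp add: field_simps power2_eq_square)
    moreover have "a * y1 = y2 * d" using nz by (simp add: y2_def)
    ultimately show "\<exists>y1>0. \<exists>y2>0. b = - y2 * c * y1 \<and> a * y1 = y2 * d" using y1 y2 by blast
  qed
  finally show ?thesis .
qed

lemma abs_iff0: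
  fixes P Q :: real
  assumes "P \<noteq> 0" "Q \<noteq> 0" "P - Q = 1"
  shows "\<bar>P\<bar> + \<bar>Q\<bar> = 1 \<longleftrightarrow> P*Q < 0"
  using assms by (cases "P > 0"; cases "Q > 0") (auto simp: mult_less_0_iff)

lemma abs_iff:
  fixes a b c d :: real
  assumes "a \<noteq> 0" "b \<noteq> 0" "c \<noteq> 0" "d \<noteq> 0" "a*d - b*c = 1"
  shows "\<bar>a * d\<bar> + \<bar>b * c\<bar> = 1 \<longleftrightarrow> a*b*c*d < 0"
proof -
  have e: "a*b*c*d = (a*d)*(b*c)" by (simp add: ac_simps)
  have "a*d \<noteq> 0" "b*c \<noteq> 0" using assms by auto
  from abs_iff0[OF this assms(5)] show ?thesis unfolding e .
qed

theorem lemma4p3: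
  fixes g :: mat2
  defines "a \<equiv> ent_a g" and "b \<equiv> ent_b g" and "c \<equiv> ent_c g" and "d \<equiv> ent_d g"
  assumes "g \<in> SL2R" and "g \<notin> small_s"
  shows "(g \<in> big_S \<longleftrightarrow> \<bar>a * d\<bar> + \<bar>b * c\<bar> = 1)
    \<and> (g \<notin> big_S \<longrightarrow>
         (\<exists>!p. case p of (y1, y2, \<delta>1, \<delta>2, v, \<sigma>) \<Rightarrow> decomp g y1 y2 \<delta>1 \<delta>2 v \<sigma>)
       \<and> (\<forall>y1 y2 \<delta>1 \<delta>2 v \<sigma>. decomp g y1 y2 \<delta>1 \<delta>2 v \<sigma> \<longrightarrow>
            y1 = sqrt \<bar>a * b / (c * d)\<bar>
          \<and> y2 = sqrt \<bar>a * c / (b * d)\<bar>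
          \<and> v = ln (sqrt \<bar>a * d\<bar> + sqrt \<bar>c * b\<bar>)
          \<and> ((sgn b = sgn a \<and> sgn c = sgn a \<and> sgn d = sgn a) \<longrightarrow> (\<delta>1, \<delta>2) = (0, 0))
          \<and> ((sgn b = - sgn a \<and> sgn c = - sgn a \<and> sgn d = sgn a) \<longrightarrow> (\<delta>1, \<delta>2) = (1, 1))
          \<and> ((sgn b = sgn a \<and> sgn c = - sgn a \<and> sgn d = - sgn a) \<longrightarrow> (\<delta>1, \<delta>2) = (1, 0))
          \<and> ((sgn b = - sgn a \<and> sgn c = sgn a \<and> sgn d = - sgn a) \<longrightarrow> (\<delta>1, \<delta>2) = (0, 1))))"
proof -
  have gm: "g = mk2 a b c d" unfolding a_def b_def c_def d_def by (rule g_mk2)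
  have nz: "a \<noteq> 0" "b \<noteq> 0" "c \<noteq> 0" "d \<noteq> 0"
    using nz_of_not_small[OF assms(6,5)] by (auto simp: a_def b_def c_def d_def)
  have det: "a*d - b*c = 1" using assms(5) unfolding SL2R_def by (subst (asm) gm) (simp add: det_mk2)
  have BS: "g \<in> big_S \<longleftrightarrow> a*b*c*d < 0"
    by (rule bigS_iff[OF assms(5,6)]) (simp_all add: a_def b_def c_def d_def)
  have P1: "g \<in> big_S \<longleftrightarrow> \<bar>a * d\<bar> + \<bar>b * c\<bar> = 1" unfolding BS using abs_iff[OF nz det] by simp
  have CH: "y1 = sqrt \<bar>a*b/(c*d)\<bar> \<and> y2 = sqrt \<bar>a*c/(b*d)\<bar> \<and> v = ln (sqrt \<bar>a*d\<bar> + sqrt \<bar>c*b\<bar>)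
    \<and> \<delta>1 = (if sgn c = sgn a then 0 else 1) \<and> \<delta>2 = (if sgn b = sgn a then 0 else 1)
    \<and> \<sigma> = (if \<delta>1 = 0 then sgn a else - sgn a)" if D: "decomp g y1 y2 \<delta>1 \<delta>2 v \<sigma>" for y1 y2 \<delta>1 \<delta>2 v \<sigma>
  proof -
    have "y1 > 0" "y2 > 0" "v > 0" "\<sigma> \<in> {1,-1}" "\<delta>1 \<in> {0,1}" "\<delta>2 \<in> {0,1}"
      "mk2 a b c d = \<sigma> *\<^sub>R (diag_y y1 ** omega_pow \<delta>1 ** hyp_rot v ** omega_pow \<delta>2 ** diag_y y2)"
      using D gm unfolding decomp_def by auto
    from char_core[OF this] show ?thesis by blast
  qed
  have P2: "g \<notin> big_S \<longrightarrow>
         (\<exists>!p. case p of (y1, y2, \<delta>1, \<delta>2, v, \<sigma>) \<Rightarrow> decomp g y1 y2 \<delta>1 \<delta>2 v \<sigma>)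
       \<and> (\<forall>y1 y2 \<delta>1 \<delta>2 v \<sigma>. decomp g y1 y2 \<delta>1 \<delta>2 v \<sigma> \<longrightarrow>
            y1 = sqrt \<bar>a * b / (c * d)\<bar>
          \<and> y2 = sqrt \<bar>a * c / (b * d)\<bar>
          \<and> v = ln (sqrt \<bar>a * d\<bar> + sqrt \<bar>c * b\<bar>)
          \<and> ((sgn b = sgn a \<and> sgn c = sgn a \<and> sgn d = sgn a) \<longrightarrow> (\<delta>1, \<delta>2) = (0, 0))
          \<and> ((sgn b = - sgn a \<and> sgn c = - sgn a \<and> sgn d = sgn a) \<longrightarrow> (\<delta>1, \<delta>2) = (1, 1))
          \<and> ((sgn b = sgn a \<and> sgn c = - sgn a \<and> sgn d = - sgn a) \<longrightarrow> (\<delta>1, \<delta>2) = (1, 0))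
          \<and> ((sgn b = - sgn a \<and> sgn c = sgn a \<and> sgn d = - sgn a) \<longrightarrow> (\<delta>1, \<delta>2) = (0, 1)))"
  proof
    assume "g \<notin> big_S"
    then have pos: "a*b*c*d > 0" using BS nz by (simp add: linorder_not_less order_le_less)
    have sa: "sgn a \<noteq> 0" using nz by (simp add: sgn_if)
    define W where "W = (sqrt \<bar>a*b/(c*d)\<bar>, sqrt \<bar>a*c/(b*d)\<bar>,
     (if sgn c = sgn a then 0 else 1::nat), (if sgn b = sgn a then 0 else 1::nat),
     ln (sqrt \<bar>a*d\<bar> + sqrt \<bar>c*b\<bar>), (if sgn c = sgn a then sgn a else - sgn a))"
    have EX: "case W of (y1, y2, \<delta>1, \<delta>2, v, \<sigma>) \<Rightarrow> decomp g y1 y2 \<delta>1 \<delta>2 v \<sigma>"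
      unfolding W_def gm using exist_core[OF nz det pos] by simp
    have UN: "p = W" if "case p of (y1, y2, \<delta>1, \<delta>2, v, \<sigma>) \<Rightarrow> decomp g y1 y2 \<delta>1 \<delta>2 v \<sigma>" for p
    proof -
      obtain y1 y2 \<delta>1 \<delta>2 v \<sigma> where p: "p = (y1, y2, \<delta>1, \<delta>2, v, \<sigma>)" by (cases p) auto
      have "decomp g y1 y2 \<delta>1 \<delta>2 v \<sigma>" using that p by simp
      from CH[OF this] show ?thesis unfolding p W_def by auto
    qed
    show "(\<exists>!p. case p of (y1, y2, \<delta>1, \<delta>2, v, \<sigma>) \<Rightarrow> decomp g y1 y2 \<delta>1 \<delta>2 v \<sigma>)
       \<and> (\<forall>y1 y2 \<delta>1 \<delta>2 v \<sigma>. decomp g y1 y2 \<delta>1 \<delta>2 v \<sigma> \<longrightarrow>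
            y1 = sqrt \<bar>a * b / (c * d)\<bar>
          \<and> y2 = sqrt \<bar>a * c / (b * d)\<bar>
          \<and> v = ln (sqrt \<bar>a * d\<bar> + sqrt \<bar>c * b\<bar>)
          \<and> ((sgn b = sgn a \<and> sgn c = sgn a \<and> sgn d = sgn a) \<longrightarrow> (\<delta>1, \<delta>2) = (0, 0))
          \<and> ((sgn b = - sgn a \<and> sgn c = - sgn a \<and> sgn d = sgn a) \<longrightarrow> (\<delta>1, \<delta>2) = (1, 1))
          \<and> ((sgn b = sgn a \<and> sgn c = - sgn a \<and> sgn d = - sgn a) \<longrightarrow> (\<delta>1, \<delta>2) = (1, 0))
          \<and> ((sgn b = - sgn a \<and> sgn c = sgn a \<and> sgn d = - sgn a) \<longrightarrow> (\<delta>1, \<delta>2) = (0, 1)))"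
    proof (intro conjI allI impI)
      show "\<exists>!p. case p of (y1, y2, \<delta>1, \<delta>2, v, \<sigma>) \<Rightarrow> decomp g y1 y2 \<delta>1 \<delta>2 v \<sigma>"
        using EX UN by (intro ex1I[of _ W]) blast+
    next
      fix y1 y2 \<delta>1 \<delta>2 v \<sigma>
      assume D: "decomp g y1 y2 \<delta>1 \<delta>2 v \<sigma>"
      note C = CH[OF D]
      show "y1 = sqrt \<bar>a * b / (c * d)\<bar>" "y2 = sqrt \<bar>a * c / (b * d)\<bar>"
        "v = ln (sqrt \<bar>a * d\<bar> + sqrt \<bar>c * b\<bar>)" using C by simp_all
      show "sgn b = sgn a \<and> sgn c = sgn a \<and> sgn d = sgn a \<Longrightarrow> (\<delta>1, \<delta>2) = (0, 0)" using C by simp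
      show "sgn b = - sgn a \<and> sgn c = - sgn a \<and> sgn d = sgn a \<Longrightarrow> (\<delta>1, \<delta>2) = (1, 1)" using C sa by auto
      show "sgn b = sgn a \<and> sgn c = - sgn a \<and> sgn d = - sgn a \<Longrightarrow> (\<delta>1, \<delta>2) = (1, 0)" using C sa by auto
      show "sgn b = - sgn a \<and> sgn c = sgn a \<and> sgn d = - sgn a \<Longrightarrow> (\<delta>1, \<delta>2) = (0, 1)" using C sa by auto
    qed
  qed
  show ?thesis using P1 P2 by blast
qed

end
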